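(* Suppose $\tilde B$ has nondegenerate coefficients. Then $\{\vartheta_m:m\in M^\circ_{\mathrm{uf}}\}$ is a reduced basis for the small canonical algebra $\underline{\mathrm{can}}(\tilde B)$.
   Context: Setup. $\Bbbk$ a field of characteristic $0$; $I$ finite, $I_{\mathrm{uf}}\subseteq I$, $I_{\mathrm{fr}}=I\setminus I_{\mathrm{uf}}$; $\tilde B=[\epsilon_{ij}]_{i\in I_{\mathrm{uf}},j\in I}$ an integer matrix with skew-symmetrizable square part $B$ (positive integers $d_i$, $d_i\epsilon_{ij}=-d_j\epsilon_{ji}$). $N_{\mathrm{uf}}$ lattice with basis $(e_i)_{i\in I_{\mathrm{uf}}}$ (componentwise order; $N^{0+}_{\mathrm{uf}}$ nonnegative elements, $N^+_{\mathrm{uf}}=N^{0+}_{\mathrm{uf}}\setminus\{0\}$), $M^\circ_{\mathrm{uf}}$ lattice with basis $(f_i)$, $V^*=M^\circ_{\mathrm{uf}}\otimes\mathbb R$, $\langle f_i,e_j\rangle=\delta_{ij}/d_i$. For $n=\sum a_ie_i$, $nB=\sum a_i\epsilon_{ij}f_j$. Indeterminates $(z_i)_{i\in I}$, $z^m=\prod z_i^{c_i}$ for $m=\sum c_if_i$; $\sigma_i=\prod_{j\in I_{\mathrm{fr}}}z_j^{\epsilon_{ij}}$, $\zeta_i=\prod_{j\in I}z_j^{\epsilon_{ij}}$; $\sigma^n=\prod\sigma_i^{a_i}$, $\zeta^n=\prod\zeta_i^{a_i}$; $\zeta^n=z^{nB}\sigma^n$. $\tilde B$ has nondegenerate coefficients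 if the rows of $[\epsilon_{ij}]_{i\in I_{\mathrm{uf}},j\in I_{\mathrm{fr}}}$ are linearly independent. Theta functions: $\vartheta_m$ ($m\in M^\circ_{\mathrm{uf}}$) is the theta function of Gross–Hacking–Keel–Kontsevich for the cluster scattering diagram of $\tilde B$ with generic basepoint in the positive orthant, constructed in $V^*$ as a sum over broken lines; the facts used are that $\vartheta_m=z^mF_m$ with $F_m\in\Bbbk[[\zeta]]$ of constant term $1$, and that products expand as $\vartheta_{p_1}\vartheta_{p_2}=\sum_m a(p_1,p_2,m)\vartheta_m$ (a convergent sum) with each $a(p_1,p_2,m)$ a formal power series in $(\sigma_i)$ with nonnegative integer coefficients. Small canonical algebra. $\Bbbk((\zeta))$ is the ring of formal series $\sum_{n\in N_{\mathrm{uf}}}c_n\zeta^n$ whose support has a componentwise lower bound. $\mathcal A=\bigoplus_{m\in M^\circ_{\mathrm{uf}}}z^m\Bbbk((\zeta))$ with the obvious multiplication (identified, by nondegeneracy, with series of Laurent monomials in $z$); for $v\in z^m\Bbbk((\zeta))$ set $\mathbf g(v)=m$ (so $\mathbf g(\sigma^n)=-nB$). $\underline{\mathrm{can}}(\tilde B)$ is the $\Bbbk[\sigma^{\pm1}]$-subalgebra of $\mathcal A$ generated by all $\vartheta_m$. A sequence in $\Bbbk((\zeta))$ converges if all its terms' supports have a common componentwise lower bound and each coefficient eventually stabilizes; a sequence $(v_k)$ in $\mathcal A$ converges if only finitely many $m$ occur with nonzero component in any $v_k$ and each component sequence converges in $\Bbbk((\zeta))$; a series converges if its partial sums do (independent of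 ordering). A countable subset $\overline{\mathcal U}\subseteq\underline{\mathrm{can}}(\tilde B)$ is a basis if every $v\in\underline{\mathrm{can}}(\tilde B)$ equals $\sum_{u}a_uu$ (convergent) for a unique function $u\mapsto a_u\in\Bbbk$. A reduced basis is a subset $\{u_m:m\in M^\circ_{\mathrm{uf}}\}\subseteq\underline{\mathrm{can}}(\tilde B)$ with each $u_m\in z^m\Bbbk[[\zeta]]$ having constant coefficient $1$, such that $\{\sigma^nu_m:n\in N_{\mathrm{uf}},m\in M^\circ_{\mathrm{uf}}\}$ is a basis. *)

theory Defs
  imports Main "HOL-Library.Function_Algebras" "HOL-Library.Countable_Set"
begin

(* Lattices N_uf and M_uf are both modelled as integer vectors indexed by I_uf:
   functions 'i => int vanishing outside Iuf (coordinates w.r.t. the bases e_i, resp. f_i). *)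
definition lat :: "'i set \<Rightarrow> ('i \<Rightarrow> int) set" where
  "lat Iuf = {x. \<forall>i. i \<notin> Iuf \<longrightarrow> x i = 0}"

definition nle :: "'i set \<Rightarrow> ('i \<Rightarrow> int) \<Rightarrow> ('i \<Rightarrow> int) \<Rightarrow> bool" where
  "nle Iuf a b \<longleftrightarrow> (\<forall>i\<in>Iuf. a i \<le> b i)"

(* Elements of the ambient ring A = (+)_m z^m k((zeta)) are represented by their coefficient
   functions: x m n = coefficient of z^m zeta^n. *)
type_synonym ('i, 'k) ser = "('i \<Rightarrow> int) \<Rightarrow> ('i \<Rightarrow> int) \<Rightarrow> 'k"

definition inA :: "'i set \<Rightarrow> ('i, 'k::zero) ser \<Rightarrow> bool" where
  "inA Iuf x \<longleftrightarrow>
     (\<forall>m n. x m n \<noteq> 0 \<longrightarrow> m \<in> lat Iuf \<and> n \<in> lat Iuf)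
   \<and> finite {m. \<exists>n. x m n \<noteq> 0}
   \<and> (\<forall>m. \<exists>b. \<forall>n. x m n \<noteq> 0 \<longrightarrow> nle Iuf b n)"

definition mulA :: "('i, 'k::comm_ring_1) ser \<Rightarrow> ('i, 'k) ser \<Rightarrow> ('i, 'k) ser" where
  "mulA x y = (\<lambda>m n. \<Sum>p\<in>{(m1, n1). x m1 n1 \<noteq> 0 \<and> y (m - m1) (n - n1) \<noteq> 0}.
                        x (fst p) (snd p) * y (m - fst p) (n - snd p))"

definition smultA :: "'k::times \<Rightarrow> ('i, 'k) ser \<Rightarrow> ('i, 'k) ser" where
  "smultA c x = (\<lambda>m n. c * x m n)"

definition nB :: "'i set \<Rightarrow> ('i \<Rightarrow> 'i \<Rightarrow> int) \<Rightarrow> ('i \<Rightarrow> int) \<Rightarrow> ('i \<Rightarrow> int)" where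
  "nB Iuf eps n = (\<lambda>j. if j \<in> Iuf then (\<Sum>i\<in>Iuf. n i * eps i j) else 0)"

(* sigma^n = z^{-nB} zeta^n, so g(sigma^n) = -nB *)
definition sigmaA :: "'i set \<Rightarrow> ('i \<Rightarrow> 'i \<Rightarrow> int) \<Rightarrow> ('i \<Rightarrow> int) \<Rightarrow> ('i, 'k::{zero,one}) ser" where
  "sigmaA Iuf eps n = (\<lambda>m k. if m = - nB Iuf eps n \<and> k = n then 1 else 0)"

definition seq_convA :: "'i set \<Rightarrow> (nat \<Rightarrow> ('i, 'k::zero) ser) \<Rightarrow> ('i, 'k) ser \<Rightarrow> bool" where
  "seq_convA Iuf s v \<longleftrightarrow>
     finite {m. \<exists>k n. s k m n \<noteq> 0}
   \<and> (\<forall>m. (\<exists>b. \<forall>k n. s k m n \<noteq> 0 \<longrightarrow> nle Iuf b n)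
         \<and> (\<forall>n. eventually (\<lambda>k. s k m n = v m n) sequentially))"

definition has_sumA :: "'i set \<Rightarrow> ('j \<Rightarrow> ('i, 'k::comm_monoid_add) ser) \<Rightarrow> 'j set \<Rightarrow> ('i, 'k) ser \<Rightarrow> bool" where
  "has_sumA Iuf f J v \<longleftrightarrow>
     (finite J \<and> v = (\<Sum>j\<in>J. f j))
   \<or> (infinite J \<and> (\<forall>e. bij_betw e (UNIV :: nat set) J \<longrightarrow>
                           seq_convA Iuf (\<lambda>k. \<Sum>i<k. f (e i)) v))"

inductive_set canA :: "'i set \<Rightarrow> ('i \<Rightarrow> 'i \<Rightarrow> int) \<Rightarrow> (('i \<Rightarrow> int) \<Rightarrow> ('i, 'k::comm_ring_1) ser)
                        \<Rightarrow> ('i, 'k) ser set"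
  for Iuf eps theta where
  sigma: "n \<in> lat Iuf \<Longrightarrow> smultA c (sigmaA Iuf eps n) \<in> canA Iuf eps theta"
| theta: "m \<in> lat Iuf \<Longrightarrow> theta m \<in> canA Iuf eps theta"
| add: "x \<in> canA Iuf eps theta \<Longrightarrow> y \<in> canA Iuf eps theta \<Longrightarrow> x + y \<in> canA Iuf eps theta"
| mul: "x \<in> canA Iuf eps theta \<Longrightarrow> y \<in> canA Iuf eps theta \<Longrightarrow> mulA x y \<in> canA Iuf eps theta"
| smult: "x \<in> canA Iuf eps theta \<Longrightarrow> smultA c x \<in> canA Iuf eps theta"

definition is_basisA :: "'i set \<Rightarrow> ('i, 'k::comm_ring_1) ser set \<Rightarrow> ('i, 'k) ser set \<Rightarrow> bool" where
  "is_basisA Iuf C U \<longleftrightarrow> U \<subseteq> C \<and> countable U \<and>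
     (\<forall>v\<in>C. \<exists>a. has_sumA Iuf (\<lambda>u. smultA (a u) u) U v
                 \<and> (\<forall>a'. has_sumA Iuf (\<lambda>u. smultA (a' u) u) U v \<longrightarrow> (\<forall>u\<in>U. a' u = a u)))"

definition pointed_at :: "'i set \<Rightarrow> ('i \<Rightarrow> int) \<Rightarrow> ('i, 'k::{zero,one}) ser \<Rightarrow> bool" where
  "pointed_at Iuf m x \<longleftrightarrow>
     (\<forall>m' n. x m' n \<noteq> 0 \<longrightarrow> m' = m \<and> n \<in> lat Iuf \<and> nle Iuf 0 n) \<and> x m 0 = 1"

definition reduced_basisA :: "'i set \<Rightarrow> ('i \<Rightarrow> 'i \<Rightarrow> int) \<Rightarrow> ('i, 'k::comm_ring_1) ser set
                              \<Rightarrow> (('i \<Rightarrow> int) \<Rightarrow> ('i, 'k) ser) \<Rightarrow> bool" where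
  "reduced_basisA Iuf eps C u \<longleftrightarrow>
     (\<forall>m\<in>lat Iuf. u m \<in> C \<and> pointed_at Iuf m (u m))
   \<and> is_basisA Iuf C {mulA (sigmaA Iuf eps n) (u m) | n m. n \<in> lat Iuf \<and> m \<in> lat Iuf}"

end

theory Submission
  imports Defs "HOL-Library.FuncSet"
begin

lemma sum_fun_apply2: "(\<Sum>p\<in>F. f p) m n = (\<Sum>p\<in>F. (f p m n :: 'a::comm_monoid_add))"
  by (induction F rule: infinite_finite_induct) auto

lemma lat_add: "a \<in> lat I \<Longrightarrow> b \<in> lat I \<Longrightarrow> a + b \<in> lat I"
  by (simp add: lat_def)
lemma lat_diff: "a \<in> lat I \<Longrightarrow> b \<in> lat I \<Longrightarrow> a - b \<in> lat I"
  by (simp add: lat_def)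
lemma lat_uminus: "a \<in> lat I \<Longrightarrow> - a \<in> lat I"
  by (simp add: lat_def)
lemma lat_nB: "nB I eps k \<in> lat I"
  by (simp add: lat_def nB_def)
lemma lat_zero: "0 \<in> lat I"
  by (simp add: lat_def)

lemma nle_trans: "nle I a b \<Longrightarrow> nle I b c \<Longrightarrow> nle I a c"
  unfolding nle_def by force
lemma nle_antisym:
  assumes "nle I a b" "nle I b a" "a \<in> lat I" "b \<in> lat I" shows "a = b"
proof (rule ext)
  fix x show "a x = b x"
    using assms by (cases "x \<in> I") (auto simp: nle_def lat_def intro: order_antisym)
qed
lemma nle_diff: "nle I 0 (a - b) \<longleftrightarrow> nle I b a"
  unfolding nle_def by auto
lemma nle_add: "nle I a b \<Longrightarrow> nle I c d \<Longrightarrow> nle I (a + c) (b + d)"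
  unfolding nle_def by (simp add: add_mono)

lemma mulA_sigma:
  fixes y :: "('i, 'k::comm_ring_1) ser"
  shows "mulA (sigmaA I eps k) y m n = y (m + nB I eps k) (n - k)"
proof (cases "y (m + nB I eps k) (n - k) = 0")
  case True
  have "{(m1, n1). (sigmaA I eps k :: ('i,'k) ser) m1 n1 \<noteq> 0 \<and> y (m - m1) (n - n1) \<noteq> 0} = {}"
    using True by (auto simp: sigmaA_def)
  then show ?thesis using True unfolding mulA_def by (simp only: sum.empty)
next
  case False
  have "{(m1, n1). (sigmaA I eps k :: ('i,'k) ser) m1 n1 \<noteq> 0 \<and> y (m - m1) (n - n1) \<noteq> 0} = {(- nB I eps k, k)}"
    using False by (auto simp: sigmaA_def)
  then show ?thesis by (simp add: mulA_def sigmaA_def)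
qed

lemma finite_box:
  assumes "finite I"
  shows "finite {k \<in> lat I. nle I b k \<and> nle I k n}"
proof -
  have "{k \<in> lat I. nle I b k \<and> nle I k n} \<subseteq> (\<lambda>g i. if i \<in> I then g i else 0) ` (PiE I (\<lambda>i. {b i..n i}))"
  proof
    fix k assume k: "k \<in> {k \<in> lat I. nle I b k \<and> nle I k n}"
    let ?g = "restrict k I"
    have "?g \<in> PiE I (\<lambda>i. {b i..n i})" using k by (auto simp: nle_def)
    moreover have "k = (\<lambda>i. if i \<in> I then ?g i else 0)" using k by (auto simp: lat_def)
    ultimately show "k \<in> (\<lambda>g i. if i \<in> I then g i else 0) ` (PiE I (\<lambda>i. {b i..n i}))" by blast
  qed
  moreover have "finite (PiE I (\<lambda>i. {b i..n i}))" using assms by (simp add: finite_PiE)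
  ultimately show ?thesis by (meson finite_imageI finite_subset)
qed

lemma countable_lat:
  assumes "finite I"
  shows "countable (lat I)"
proof -
  have "lat I \<subseteq> (\<Union>N::nat. {k \<in> lat I. nle I (\<lambda>i. - int N) k \<and> nle I k (\<lambda>i. int N)})"
  proof
    fix k assume k: "k \<in> lat I"
    let ?N = "nat (\<Sum>i\<in>I. \<bar>k i\<bar>)"
    have "\<bar>k i\<bar> \<le> (\<Sum>i\<in>I. \<bar>k i\<bar>)" if "i \<in> I" for i
      using member_le_sum[OF that, of "\<lambda>i. \<bar>k i\<bar>"] assms by auto
    then have "nle I (\<lambda>i. - int ?N) k \<and> nle I k (\<lambda>i. int ?N)"
      unfolding nle_def by force
    then show "k \<in> (\<Union>N::nat. {k \<in> lat I. nle I (\<lambda>i. - int N) k \<and> nle I k (\<lambda>i. int N)})"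
      using k by blast
  qed
  moreover have "countable (\<Union>N::nat. {k \<in> lat I. nle I (\<lambda>i. - int N) k \<and> nle I k (\<lambda>i. int N)})"
    using finite_box[OF assms] by (intro countable_UN) (auto intro: countable_finite)
  ultimately show ?thesis by (rule countable_subset)
qed

lemma exists_minimal:
  assumes "finite T" "T \<noteq> {}" "T \<subseteq> lat I" "finite I"
  shows "\<exists>k0\<in>T. \<forall>k\<in>T. nle I k k0 \<longrightarrow> k = k0"
proof -
  let ?s = "\<lambda>k. \<Sum>i\<in>I. k i"
  define k0 where "k0 = arg_min_on ?s T"
  have k0: "k0 \<in> T" "\<forall>k\<in>T. ?s k0 \<le> ?s k"
    using arg_min_if_finite[OF assms(1,2), of ?s] unfolding k0_def by (auto simp: not_less[symmetric])
  show ?thesis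
  proof (intro bexI[OF _ k0(1)] ballI impI)
    fix k assume k: "k \<in> T" "nle I k k0"
    show "k = k0"
    proof (rule ccontr)
      assume ne: "k \<noteq> k0"
      have "\<exists>i\<in>I. k i \<noteq> k0 i"
      proof (rule ccontr)
        assume "\<not> (\<exists>i\<in>I. k i \<noteq> k0 i)"
        then have "k = k0" using k(1) k0(1) assms(3)
          by (intro ext, case_tac "x \<in> I") (auto simp: lat_def subset_iff, metis)
        then show False using ne by simp
      qed
      then obtain i where i: "i \<in> I" "k i < k0 i" using k(2) by (force simp: nle_def)
      have "?s k < ?s k0"
        using sum_strict_mono_ex1[OF assms(4), of k k0] i k(2) by (auto simp: nle_def)
      then show False using k0(2) k(1) by force
    qed
  qed
qed

definition good :: "'i set \<Rightarrow> ('i,'k::zero) ser \<Rightarrow> bool" where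
  "good I x \<longleftrightarrow> (\<forall>m n. x m n \<noteq> 0 \<longrightarrow> m \<in> lat I \<and> n \<in> lat I) \<and> finite {m. \<exists>n. x m n \<noteq> 0}
     \<and> (\<exists>B. \<forall>m n. x m n \<noteq> 0 \<longrightarrow> nle I B n)"

lemma nle_min1: "nle I a n \<Longrightarrow> nle I (\<lambda>i. min (a i) (b i)) n"
  unfolding nle_def by (simp add: min.coboundedI1)
lemma nle_min2: "nle I b n \<Longrightarrow> nle I (\<lambda>i. min (a i) (b i)) n"
  unfolding nle_def by (simp add: min.coboundedI2)

lemma good_add:
  fixes x y :: "('i,'k::comm_monoid_add) ser"
  assumes gx: "good I x" and gy: "good I y" shows "good I (x + y)"
proof -
  obtain Bx By where Bx: "\<forall>m n. x m n \<noteq> 0 \<longrightarrow> nle I Bx n" and By: "\<forall>m n. y m n \<noteq> 0 \<longrightarrow> nle I By n"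
    using assms unfolding good_def by blast
  have nz: "(x + y) m n \<noteq> 0 \<Longrightarrow> x m n \<noteq> 0 \<or> y m n \<noteq> 0" for m n by auto
  have sub: "{m. \<exists>n. (x + y) m n \<noteq> 0} \<subseteq> {m. \<exists>n. x m n \<noteq> 0} \<union> {m. \<exists>n. y m n \<noteq> 0}"
    using nz by blast
  have f1: "finite {m. \<exists>n. x m n \<noteq> 0}" "finite {m. \<exists>n. y m n \<noteq> 0}" using gx gy unfolding good_def by auto
  have fin: "finite {m. \<exists>n. (x + y) m n \<noteq> 0}" by (rule finite_subset[OF sub]) (use f1 in simp)
  have bnd: "\<forall>m n. (x + y) m n \<noteq> 0 \<longrightarrow> nle I (\<lambda>i. min (Bx i) (By i)) n"
    using nz Bx By nle_min1 nle_min2 by blast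
  have lat: "\<forall>m n. (x + y) m n \<noteq> 0 \<longrightarrow> m \<in> lat I \<and> n \<in> lat I"
    using nz gx gy unfolding good_def by blast
  show ?thesis unfolding good_def using fin bnd lat by blast
qed

lemma good_smult:
  fixes x :: "('i,'k::mult_zero) ser"
  assumes gx: "good I x" shows "good I (smultA c x)"
proof -
  have nz: "smultA c x m n \<noteq> 0 \<Longrightarrow> x m n \<noteq> 0" for m n by (auto simp: smultA_def)
  have sub: "{m. \<exists>n. smultA c x m n \<noteq> 0} \<subseteq> {m. \<exists>n. x m n \<noteq> 0}" using nz by blast
  have fin: "finite {m. \<exists>n. smultA c x m n \<noteq> 0}" 
    by (rule finite_subset[OF sub]) (use gx in \<open>simp add: good_def\<close>)
  obtain B where B: "\<forall>m n. x m n \<noteq> 0 \<longrightarrow> nle I B n" using gx unfolding good_def by blast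
  have lat: "\<forall>m n. x m n \<noteq> 0 \<longrightarrow> m \<in> lat I \<and> n \<in> lat I" using gx unfolding good_def by blast
  show ?thesis unfolding good_def using fin B lat nz by blast
qed

lemma mulA_nz:
  assumes "mulA x y m n \<noteq> 0"
  shows "\<exists>m1 n1. x m1 n1 \<noteq> 0 \<and> y (m - m1) (n - n1) \<noteq> 0"
  using sum.not_neutral_contains_not_neutral[OF assms[unfolded mulA_def]] by blast

lemma good_mul:
  fixes x y :: "('i,'k::comm_ring_1) ser"
  assumes "good I x" "good I y" shows "good I (mulA x y)"
proof -
  obtain Bx By where Bx: "\<forall>m n. x m n \<noteq> 0 \<longrightarrow> nle I Bx n" and By: "\<forall>m n. y m n \<noteq> 0 \<longrightarrow> nle I By n"
    using assms unfolding good_def by blast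
  have "{m. \<exists>n. mulA x y m n \<noteq> 0} \<subseteq> (\<lambda>(a,b). a + b) ` ({m. \<exists>n. x m n \<noteq> 0} \<times> {m. \<exists>n. y m n \<noteq> 0})"
  proof
    fix m assume "m \<in> {m. \<exists>n. mulA x y m n \<noteq> 0}"
    then obtain n m1 n1 where "x m1 n1 \<noteq> 0" "y (m - m1) (n - n1) \<noteq> 0" using mulA_nz by blast
    then show "m \<in> (\<lambda>(a,b). a + b) ` ({m. \<exists>n. x m n \<noteq> 0} \<times> {m. \<exists>n. y m n \<noteq> 0})"
      by (intro image_eqI[of _ _ "(m1, m - m1)"]) auto
  qed
  moreover have "finite ((\<lambda>(a,b). a + b) ` ({m. \<exists>n. x m n \<noteq> 0} \<times> {m. \<exists>n. y m n \<noteq> 0}))"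
    using assms unfolding good_def by auto
  moreover have "\<forall>m n. mulA x y m n \<noteq> 0 \<longrightarrow> nle I (Bx + By) n \<and> m \<in> lat I \<and> n \<in> lat I"
  proof (intro allI impI)
    fix m n assume "mulA x y m n \<noteq> 0"
    then obtain m1 n1 where h: "x m1 n1 \<noteq> 0" "y (m - m1) (n - n1) \<noteq> 0" using mulA_nz by blast
    have "nle I (Bx + By) (n1 + (n - n1))" using h Bx By by (intro nle_add) auto
    moreover have "m1 + (m - m1) \<in> lat I" "n1 + (n - n1) \<in> lat I"
      using h assms unfolding good_def by (blast intro: lat_add)+
    ultimately show "nle I (Bx + By) n \<and> m \<in> lat I \<and> n \<in> lat I" by simp
  qed
  ultimately have "finite {m. \<exists>n. mulA x y m n \<noteq> 0}" 
    "\<forall>m n. mulA x y m n \<noteq> 0 \<longrightarrow> nle I (Bx + By) n \<and> m \<in> lat I \<and> n \<in> lat I"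
    using finite_subset by blast+
  then show ?thesis unfolding good_def by blast
qed

lemma good_sigma:
  assumes "n \<in> lat I"
  shows "good I (sigmaA I eps n :: ('i,'k::zero_neq_one) ser)"
proof -
  have "{m. \<exists>k. (sigmaA I eps n :: ('i,'k) ser) m k \<noteq> 0} \<subseteq> {- nB I eps n}" by (auto simp: sigmaA_def)
  then show ?thesis using assms unfolding good_def
    by (auto simp: sigmaA_def lat_uminus lat_nB nle_def intro: finite_subset)
qed

lemma pointed_nz:
  assumes "pointed_at I j x" "x m n \<noteq> 0" shows "m = j" "n \<in> lat I" "nle I 0 n"
  using assms unfolding pointed_at_def by auto

lemma pnz:
  assumes "\<forall>j\<in>lat I. pointed_at I j (theta j)" "j \<in> lat I" "theta j m n \<noteq> 0"
  shows "m = j" "n \<in> lat I" "nle I 0 n"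
  using assms unfolding pointed_at_def by auto

lemma good_pointed:
  assumes "pointed_at I j x" "j \<in> lat I" shows "good I x"
proof -
  have "{m. \<exists>k. x m k \<noteq> 0} \<subseteq> {j}" using pointed_nz[OF assms(1)] by auto
  then have "finite {m. \<exists>k. x m k \<noteq> 0}" using finite_subset by blast
  moreover have "\<forall>m n. x m n \<noteq> 0 \<longrightarrow> m \<in> lat I \<and> n \<in> lat I" using assms pointed_nz[OF assms(1)] by blast
  moreover have "\<forall>m n. x m n \<noteq> 0 \<longrightarrow> nle I 0 n" using pointed_nz[OF assms(1)] by blast
  ultimately show ?thesis unfolding good_def by blast
qed

lemma canA_good:
  assumes "\<forall>m\<in>lat I. pointed_at I m (theta m)"
  shows "x \<in> canA I eps theta \<Longrightarrow> good I x"
proof (induction x rule: canA.induct)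
  case (sigma n c) then show ?case by (intro good_smult good_sigma)
next
  case (theta m) then show ?case using assms good_pointed by blast
next
  case (add x y) then show ?case by (intro good_add)
next
  case (mul x y) then show ?case by (intro good_mul)
next
  case (smult x c) then show ?case by (intro good_smult)
qed

lemma has_sumA_intro:
  fixes f :: "'j \<Rightarrow> ('i,'k::comm_monoid_add) ser"
  assumes "countable J"
   and fin: "finite {m. \<exists>p\<in>J. \<exists>n. f p m n \<noteq> 0}"
   and bnd: "\<forall>p\<in>J. \<forall>m n. f p m n \<noteq> 0 \<longrightarrow> nle I B n"
   and loc: "\<And>m n. \<exists>S. finite S \<and> S \<subseteq> J \<and> (\<forall>p\<in>J-S. f p m n = 0) \<and> v m n = (\<Sum>p\<in>S. f p m n)"
  shows "has_sumA I f J v"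
proof (cases "finite J")
  case True
  have "v = (\<Sum>j\<in>J. f j)"
  proof (intro ext)
    fix m n
    obtain S where S: "finite S" "S \<subseteq> J" "\<forall>p\<in>J-S. f p m n = 0" "v m n = (\<Sum>p\<in>S. f p m n)"
      using loc[of m n] by (elim exE conjE) (rule that, assumption+)
    have "(\<Sum>p\<in>S. f p m n) = (\<Sum>p\<in>J. f p m n)"
      using S True by (intro sum.mono_neutral_left) auto
    then show "v m n = (\<Sum>j\<in>J. f j) m n" using S(4) by (simp add: sum_fun_apply2)
  qed
  then show ?thesis using True by (simp add: has_sumA_def)
next
  case False
  show ?thesis unfolding has_sumA_def
  proof (intro disjI2 conjI allI impI False)
    fix e :: "nat \<Rightarrow> 'j" assume e: "bij_betw e UNIV J"
    have eJ: "e i \<in> J" for i using e by (auto simp: bij_betw_def)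
    have inje: "inj e" using e by (auto simp: bij_betw_def)
    have nz: "\<exists>i<k. f (e i) m n \<noteq> 0" if "(\<Sum>i<k. f (e i)) m n \<noteq> 0" for k m n
      using that sum.not_neutral_contains_not_neutral[of "\<lambda>i. f (e i) m n" "{..<k}"]
      by (auto simp: sum_fun_apply2)
    show "seq_convA I (\<lambda>k. \<Sum>i<k. f (e i)) v"
      unfolding seq_convA_def
    proof (intro conjI allI)
      have "{m. \<exists>k n. (\<Sum>i<k. f (e i)) m n \<noteq> 0} \<subseteq> {m. \<exists>p\<in>J. \<exists>n. f p m n \<noteq> 0}"
        using nz eJ by blast
      then show "finite {m. \<exists>k n. (\<Sum>i<k. f (e i)) m n \<noteq> 0}" using fin by (rule finite_subset)
    next
      fix m
      show "\<exists>b. \<forall>k n. (\<Sum>i<k. f (e i)) m n \<noteq> 0 \<longrightarrow> nle I b n"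
        using nz eJ bnd by blast
    next
      fix m n
      obtain S where S: "finite S" "S \<subseteq> J" "\<forall>p\<in>J-S. f p m n = 0" "v m n = (\<Sum>p\<in>S. f p m n)"
        using loc[of m n] by (elim exE conjE) (rule that, assumption+)
      have "finite (e -` S)" using S(1) inje by (simp add: finite_vimageI)
      then obtain N where N: "e -` S \<subseteq> {..<N}" using finite_nat_bounded by blast
      show "\<forall>\<^sub>F k in sequentially. (\<Sum>i<k. f (e i)) m n = v m n"
        unfolding eventually_sequentially
      proof (intro exI allI impI)
        fix k assume k: "N \<le> k"
        have Ssub: "S \<subseteq> e ` {..<k}"
        proof
          fix p assume "p \<in> S"
          then obtain i where i: "e i = p" using e S(2) by (auto simp: bij_betw_def)
          then have "i \<in> e -` S" using \<open>p \<in> S\<close> by simp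
          then have "i < k" using N k by auto
          then show "p \<in> e ` {..<k}" using i by blast
        qed
        have "(\<Sum>i<k. f (e i)) m n = (\<Sum>i<k. f (e i) m n)" by (simp add: sum_fun_apply2)
        also have "\<dots> = (\<Sum>p\<in>e ` {..<k}. f p m n)"
          using inje by (simp add: sum.reindex inj_on_subset)
        also have "\<dots> = (\<Sum>p\<in>S. f p m n)"
          using Ssub S(3) eJ by (intro sum.mono_neutral_right) auto
        finally show "(\<Sum>i<k. f (e i)) m n = v m n" using S(4) by simp
      qed
    qed
  qed
qed

lemma has_sumA_reindex:
  assumes inj: "inj_on h P"
  shows "has_sumA I f (h ` P) v \<longleftrightarrow> has_sumA I (f \<circ> h) P v"
proof (cases "finite P")
  case True
  then show ?thesis using inj by (simp add: has_sumA_def sum.reindex)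
next
  case False
  then have inf: "infinite (h ` P)" using inj finite_image_iff by blast
  have hb: "bij_betw h P (h ` P)" using inj by (simp add: bij_betw_imageI)
  show ?thesis
  proof
    assume H: "has_sumA I f (h ` P) v"
    show "has_sumA I (f \<circ> h) P v" unfolding has_sumA_def
    proof (intro disjI2 conjI allI impI False)
      fix e' :: "nat \<Rightarrow> _" assume e': "bij_betw e' UNIV P"
      have "bij_betw (h \<circ> e') UNIV (h ` P)" using bij_betw_trans[OF e' hb] .
      then show "seq_convA I (\<lambda>k. \<Sum>i<k. (f \<circ> h) (e' i)) v"
        using H inf unfolding has_sumA_def by (simp add: comp_def)
    qed
  next
    assume H: "has_sumA I (f \<circ> h) P v"
    show "has_sumA I f (h ` P) v" unfolding has_sumA_def
    proof (intro disjI2 conjI allI impI inf)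
      fix e :: "nat \<Rightarrow> _" assume e: "bij_betw e UNIV (h ` P)"
      let ?e' = "the_inv_into P h \<circ> e"
      have b: "bij_betw ?e' UNIV P"
        using bij_betw_trans[OF e bij_betw_the_inv_into[OF hb]] .
      have eq: "h (?e' i) = e i" for i
      proof -
      have "e i \<in> h ` P" using e by (auto simp: bij_betw_def)
      then show ?thesis using f_the_inv_into_f[OF inj] by simp
    qed
      have "seq_convA I (\<lambda>k. \<Sum>i<k. (f \<circ> h) (?e' i)) v"
        using H b False unfolding has_sumA_def by blast
      then show "seq_convA I (\<lambda>k. \<Sum>i<k. f (e i)) v"
        using eq by (simp add: comp_def)
    qed
  qed
qed

lemma has_sumA_diff:
  fixes f g :: "'j \<Rightarrow> ('i,'k::ab_group_add) ser"
  assumes "has_sumA I f J v" "has_sumA I g J w"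
  shows "has_sumA I (\<lambda>j. f j - g j) J (v - w)"
proof (cases "finite J")
  case True
  then show ?thesis using assms by (simp add: has_sumA_def sum_subtractf)
next
  case False
  show ?thesis unfolding has_sumA_def
  proof (intro disjI2 conjI allI impI False)
    fix e :: "nat \<Rightarrow> 'j" assume e: "bij_betw e UNIV J"
    let ?s = "\<lambda>k. \<Sum>i<k. f (e i)" and ?t = "\<lambda>k. \<Sum>i<k. g (e i)"
    have cs: "seq_convA I ?s v" "seq_convA I ?t w"
      using assms e False unfolding has_sumA_def by auto
    have eq: "(\<lambda>k. \<Sum>i<k. f (e i) - g (e i)) = (\<lambda>k. ?s k - ?t k)"
      by (simp add: sum_subtractf)
    have nz: "(?s k - ?t k) m n \<noteq> 0 \<Longrightarrow> ?s k m n \<noteq> 0 \<or> ?t k m n \<noteq> 0" for k m n by auto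
    show "seq_convA I (\<lambda>k. \<Sum>i<k. f (e i) - g (e i)) (v - w)"
      unfolding eq seq_convA_def
    proof (intro conjI allI)
      have "{m. \<exists>k n. (?s k - ?t k) m n \<noteq> 0} \<subseteq> {m. \<exists>k n. ?s k m n \<noteq> 0} \<union> {m. \<exists>k n. ?t k m n \<noteq> 0}"
        using nz by blast
      then show "finite {m. \<exists>k n. (?s k - ?t k) m n \<noteq> 0}"
        using cs unfolding seq_convA_def by (blast intro: finite_subset)
    next
      fix m
      obtain b1 b2 where b1: "\<forall>k n. ?s k m n \<noteq> 0 \<longrightarrow> nle I b1 n" and b2: "\<forall>k n. ?t k m n \<noteq> 0 \<longrightarrow> nle I b2 n"
        using cs unfolding seq_convA_def by blast
      show "\<exists>b. \<forall>k n. (?s k - ?t k) m n \<noteq> 0 \<longrightarrow> nle I b n"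
        using nz b1 b2 nle_min1 nle_min2 by blast
    next
      fix m n
      have "\<forall>\<^sub>F k in sequentially. ?s k m n = v m n" "\<forall>\<^sub>F k in sequentially. ?t k m n = w m n"
        using cs unfolding seq_convA_def by auto
      then show "\<forall>\<^sub>F k in sequentially. (?s k - ?t k) m n = (v - w) m n"
        by eventually_elim simp
    qed
  qed
qed

lemma Uf_apply:
  "mulA (sigmaA I eps k) (theta j) m n = (theta j (m + nB I eps k) (n - k) :: 'k::comm_ring_1)"
  by (rule mulA_sigma)

lemma core:
  fixes theta :: "('i\<Rightarrow>int) \<Rightarrow> ('i,'k::comm_ring_1) ser"
  assumes pt: "\<forall>j\<in>lat I. pointed_at I j (theta j)" and fI: "finite I"
   and F: "finite F" "F \<subseteq> lat I \<times> lat I" "(k1,j1) \<in> F" "c (k1,j1) \<noteq> 0"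
  shows "\<exists>k0. k0 \<in> lat I \<and> nle I k0 k1 \<and>
     (\<Sum>p\<in>F. smultA (c p) (mulA (sigmaA I eps (fst p)) (theta (snd p)))) (j1 - nB I eps k1) k0 \<noteq> 0"
proof -
  define m' where "m' = j1 - nB I eps k1"
  define T where "T = fst ` {p\<in>F. snd p = m' + nB I eps (fst p) \<and> c p \<noteq> 0 \<and> nle I (fst p) k1}"
  have "finite T" using F(1) unfolding T_def by simp
  moreover have "k1 \<in> T" unfolding T_def m'_def using F(3,4)
    by (intro image_eqI[of _ _ "(k1,j1)"]) (auto simp: nle_def)
  moreover have "T \<subseteq> lat I" using F(2) unfolding T_def by auto
  ultimately obtain k0 where k0: "k0 \<in> T" "\<forall>k\<in>T. nle I k k0 \<longrightarrow> k = k0"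
    using exists_minimal[OF _ _ _ fI] by blast
  define p0 where "p0 = (k0, m' + nB I eps k0)"
  have p0: "p0 \<in> F" "c p0 \<noteq> 0" "nle I k0 k1"
    using k0(1) unfolding T_def p0_def by auto
  have j0: "m' + nB I eps k0 \<in> lat I" using p0(1) F(2) unfolding p0_def by auto
  let ?g = "\<lambda>p. c p * theta (snd p) (m' + nB I eps (fst p)) (k0 - fst p)"
  have "(\<Sum>p\<in>F. smultA (c p) (mulA (sigmaA I eps (fst p)) (theta (snd p)))) m' k0 = (\<Sum>p\<in>F. ?g p)"
    by (simp add: sum_fun_apply2 smultA_def Uf_apply)
  also have "\<dots> = (\<Sum>p\<in>{p0}. ?g p)"
  proof (rule sum.mono_neutral_right[OF F(1)])
    show "{p0} \<subseteq> F" using p0 by simp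
    show "\<forall>p\<in>F - {p0}. ?g p = 0"
    proof (intro ballI, rule ccontr)
      fix p assume p: "p \<in> F - {p0}" "?g p \<noteq> 0"
      then have cp: "c p \<noteq> 0" and th: "theta (snd p) (m' + nB I eps (fst p)) (k0 - fst p) \<noteq> 0" by auto
      have sl: "snd p \<in> lat I" using p(1) F(2) by auto
      have ptj: "pointed_at I (snd p) (theta (snd p))" using pt sl by blast
      have e1: "m' + nB I eps (fst p) = snd p" using ptj th unfolding pointed_at_def by blast
      have e2: "nle I 0 (k0 - fst p)" using ptj th unfolding pointed_at_def by blast
      have "nle I (fst p) k0" using e2 by (simp add: nle_diff)
      then have "nle I (fst p) k1" by (rule nle_trans[OF _ p0(3)])
      then have "fst p \<in> T" unfolding T_def using p(1) e1 cp by force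
      then have "fst p = k0" using k0(2) \<open>nle I (fst p) k0\<close> by blast
      then have "p = p0" unfolding p0_def using e1 by (metis prod.collapse)
      then show False using p(1) by simp
    qed
  qed
  also have "\<dots> = c p0"
    using pt j0 unfolding p0_def pointed_at_def by simp
  moreover have "k0 \<in> lat I" using k0(1) \<open>T \<subseteq> lat I\<close> by auto
  ultimately show ?thesis using p0 unfolding m'_def by auto
qed

lemma uniq:
  fixes theta :: "('i\<Rightarrow>int) \<Rightarrow> ('i,'k::comm_ring_1) ser"
  assumes pt: "\<forall>j\<in>lat I. pointed_at I j (theta j)" and fI: "finite I"
   and H: "has_sumA I (\<lambda>p. smultA (c p) (mulA (sigmaA I eps (fst p)) (theta (snd p)))) (lat I \<times> lat I) 0"
  shows "\<forall>p\<in>lat I \<times> lat I. c p = 0"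
proof (rule ccontr)
  let ?P = "lat I \<times> lat I"
  let ?f = "\<lambda>p. smultA (c p) (mulA (sigmaA I eps (fst p)) (theta (snd p)))"
  assume "\<not> (\<forall>p\<in>?P. c p = 0)"
  then obtain k1 j1 where p1: "(k1, j1) \<in> ?P" "c (k1, j1) \<noteq> 0" by auto
  define m' where "m' = j1 - nB I eps k1"
  show False
  proof (cases "finite ?P")
    case True
    have "0 = (\<Sum>p\<in>?P. ?f p)" using H True by (simp add: has_sumA_def)
    moreover obtain k0 where "(\<Sum>p\<in>?P. ?f p) m' k0 \<noteq> 0"
      using core[where c = c and eps = eps, OF pt fI True subset_refl p1(1) p1(2)] unfolding m'_def by blast
    ultimately show False by (metis zero_fun_def)
  next
    case False
    have cP: "countable ?P" using countable_lat[OF fI] by (simp add: countable_SIGMA)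
    define e where "e = from_nat_into ?P"
    have e: "bij_betw e UNIV ?P" unfolding e_def using bij_betw_from_nat_into[OF cP False] .
    have inje: "inj e" and ran: "range e = ?P" using e by (auto simp: bij_betw_def)
    have sc: "seq_convA I (\<lambda>k. \<Sum>i<k. ?f (e i)) 0" using H False e unfolding has_sumA_def by auto
    have sc2: "(\<exists>b. \<forall>k n. (\<Sum>i<k. ?f (e i)) m' n \<noteq> 0 \<longrightarrow> nle I b n)
       \<and> (\<forall>n. \<forall>\<^sub>F k in sequentially. (\<Sum>i<k. ?f (e i)) m' n = (0::('i,'k) ser) m' n)"
      using sc unfolding seq_convA_def by blast
    then obtain b where b: "\<forall>k n. (\<Sum>i<k. ?f (e i)) m' n \<noteq> 0 \<longrightarrow> nle I b n" by blast
    have ev: "\<forall>n. \<forall>\<^sub>F k in sequentially. (\<Sum>i<k. ?f (e i)) m' n = 0"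
      using sc2 by simp
    define box where "box = {k \<in> lat I. nle I b k \<and> nle I k k1}"
    have "finite box" unfolding box_def using finite_box[OF fI] .
    then have "\<forall>\<^sub>F k in sequentially. \<forall>n\<in>box. (\<Sum>i<k. ?f (e i)) m' n = 0"
      using ev by (simp add: eventually_ball_finite)
    then obtain N where N: "\<forall>k\<ge>N. \<forall>n\<in>box. (\<Sum>i<k. ?f (e i)) m' n = 0"
      unfolding eventually_sequentially by blast
    obtain i1 where i1: "e i1 = (k1, j1)" using p1 ran by (metis imageE)
    define K where "K = max N (Suc i1)"
    have Fsub: "e ` {..<K} \<subseteq> ?P" using ran by auto
    have "i1 \<in> {..<K}" unfolding K_def by simp
    then have Fin: "(k1, j1) \<in> e ` {..<K}" by (rule image_eqI[where f = e and x = i1, OF i1[symmetric]])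
    obtain k0 where k0: "k0 \<in> lat I" "nle I k0 k1" "(\<Sum>p\<in>e ` {..<K}. ?f p) m' k0 \<noteq> 0"
      using core[where c = c and eps = eps, OF pt fI _ Fsub Fin p1(2)] unfolding m'_def by blast
    have "(\<Sum>p\<in>e ` {..<K}. ?f p) = (\<Sum>i<K. ?f (e i))"
      using inje by (simp add: sum.reindex inj_on_subset)
    then have nz: "(\<Sum>i<K. ?f (e i)) m' k0 \<noteq> 0" using k0(3) by simp
    then have "k0 \<in> box" using b k0 unfolding box_def by blast
    then show False using N nz unfolding K_def by simp
  qed
qed

lemma lat_ne:
  assumes "k \<in> lat I" "n \<in> lat I" "k \<noteq> n" "nle I k n"
  shows "\<exists>i\<in>I. k i < n i"
proof (rule ccontr)
  assume "\<not> (\<exists>i\<in>I. k i < n i)"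
  then have "\<forall>i\<in>I. k i = n i" using assms(4) unfolding nle_def by force
  then have "k = n" using assms(1,2) by (intro ext, case_tac "x \<in> I") (auto simp: lat_def)
  then show False using assms(3) by simp
qed

lemma exist:
  fixes theta :: "('i\<Rightarrow>int) \<Rightarrow> ('i,'k::comm_ring_1) ser"
  assumes pt: "\<forall>j\<in>lat I. pointed_at I j (theta j)" and fI: "finite I"
   and v: "good I v"
  shows "\<exists>C. has_sumA I (\<lambda>p. smultA (C p) (mulA (sigmaA I eps (fst p)) (theta (snd p)))) (lat I \<times> lat I) v"
proof -
  obtain B where B: "\<forall>m n. v m n \<noteq> 0 \<longrightarrow> nle I B n" using v unfolding good_def by blast
  have vl: "v m n \<noteq> 0 \<Longrightarrow> m \<in> lat I \<and> n \<in> lat I" for m n using v unfolding good_def by blast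
  define box where "box n = {k \<in> lat I. nle I B k \<and> nle I k n}" for n
  have fbox: "finite (box n)" for n unfolding box_def using finite_box[OF fI] .
  define R where "R = {(k,n). k \<in> lat I \<and> n \<in> lat I \<and> nle I B k \<and> nle I k n \<and> k \<noteq> n}"
  have "R \<subseteq> measure (\<lambda>n. nat (\<Sum>i\<in>I. n i - B i))"
  proof
    fix x assume "x \<in> R"
    then obtain k n where x: "x = (k,n)" "k \<in> lat I" "n \<in> lat I" "nle I B k" "nle I k n" "k \<noteq> n"
      unfolding R_def by auto
    obtain i where i: "i \<in> I" "k i < n i" using lat_ne[OF x(2,3,6,5)] by blast
    have "(\<Sum>i\<in>I. k i - B i) < (\<Sum>i\<in>I. n i - B i)"
      using sum_strict_mono_ex1[OF fI, of "\<lambda>i. k i - B i" "\<lambda>i. n i - B i"] i x(5)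
      by (auto simp: nle_def)
    moreover have "0 \<le> (\<Sum>i\<in>I. k i - B i)" using x(4) by (auto simp: nle_def intro: sum_nonneg)
    ultimately show "x \<in> measure (\<lambda>n. nat (\<Sum>i\<in>I. n i - B i))" using x(1) by simp
  qed
  then have wfR: "wf R" by (rule wf_subset[OF wf_measure])
  define Fm where "Fm m rec n = (if n \<in> lat I \<and> nle I B n then v m n -
      (\<Sum>k\<in>box n - {n}. rec k * theta (m + nB I eps k) (m + nB I eps k) (n - k)) else 0)" for m rec n
  define G where "G m = wfrec R (Fm m)" for m
  have Geq: "G m n = Fm m (G m) n" for m n
  proof -
    have "G m n = Fm m (cut (G m) R n) n" unfolding G_def by (rule wfrec[OF wfR])
    also have "\<dots> = Fm m (G m) n"
    proof (cases "n \<in> lat I \<and> nle I B n")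
      case True
      have sc: "(\<Sum>k\<in>box n - {n}. cut (G m) R n k * theta (m + nB I eps k) (m + nB I eps k) (n - k)) =
            (\<Sum>k\<in>box n - {n}. G m k * theta (m + nB I eps k) (m + nB I eps k) (n - k))"
        using True by (intro sum.cong refl) (auto simp: cut_apply R_def box_def)
      show ?thesis unfolding Fm_def if_P[OF True] sc ..
    next
      case False
      show ?thesis unfolding Fm_def if_not_P[OF False] ..
    qed
    finally show ?thesis .
  qed
  have G1: "G m n \<noteq> 0 \<Longrightarrow> n \<in> lat I \<and> nle I B n" for m n
    using Geq[of m n] unfolding Fm_def by (auto split: if_splits)
  have G2: "G m n = 0" if z: "\<forall>n. v m n = 0" for m n
    using wfR
  proof (induction n rule: wf_induct_rule)
    case (less n)
    show ?case
    proof (cases "n \<in> lat I \<and> nle I B n")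
      case True
      have "(\<Sum>k\<in>box n - {n}. G m k * theta (m + nB I eps k) (m + nB I eps k) (n - k)) = 0"
        using less True by (intro sum.neutral) (auto simp: R_def box_def)
      then show ?thesis using Geq[of m n] z unfolding Fm_def by simp
    next
      case False
      then show ?thesis using G1 by blast
    qed
  qed
  define C where "C p = G (snd p - nB I eps (fst p)) (fst p)" for p
  let ?f = "\<lambda>p. smultA (C p) (mulA (sigmaA I eps (fst p)) (theta (snd p)))"
  have fval: "?f p m n = C p * theta (snd p) (m + nB I eps (fst p)) (n - fst p)" for p m n
    by (simp add: smultA_def Uf_apply)
  have fnz: "m + nB I eps (fst p) = snd p \<and> n - fst p \<in> lat I \<and> nle I (fst p) n \<and> C p \<noteq> 0 \<and> G m (fst p) \<noteq> 0
       \<and> nle I B (fst p) \<and> fst p \<in> lat I"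
    if "?f p m n \<noteq> 0" "p \<in> lat I \<times> lat I" for p m n
  proof -
    have th: "theta (snd p) (m + nB I eps (fst p)) (n - fst p) \<noteq> 0" and cp: "C p \<noteq> 0"
      using that(1) fval by auto
    have sl: "snd p \<in> lat I" using that(2) by auto
    have e: "m + nB I eps (fst p) = snd p" "n - fst p \<in> lat I" "nle I 0 (n - fst p)"
      using pt sl th unfolding pointed_at_def by blast+
    have "snd p - nB I eps (fst p) = m" using e(1) by (metis add_diff_cancel)
    then have Gnz: "G m (fst p) \<noteq> 0" using cp unfolding C_def by simp
    have e3: "nle I (fst p) n" using e(3) by (simp only: nle_diff)
    show ?thesis using e(1,2) e3 cp Gnz G1[OF Gnz] by blast
  qed
  have "has_sumA I ?f (lat I \<times> lat I) v"
  proof (rule has_sumA_intro[where B = B])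
    show "countable (lat I \<times> lat I)" using countable_lat[OF fI] by (simp add: countable_SIGMA)
    have "{m. \<exists>p\<in>lat I \<times> lat I. \<exists>n. ?f p m n \<noteq> 0} \<subseteq> {m. \<exists>n. v m n \<noteq> 0}"
    proof
      fix m assume "m \<in> {m. \<exists>p\<in>lat I \<times> lat I. \<exists>n. ?f p m n \<noteq> 0}"
      then obtain p n where "p \<in> lat I \<times> lat I" "?f p m n \<noteq> 0" by blast
      then have "G m (fst p) \<noteq> 0" using fnz by blast
      then show "m \<in> {m. \<exists>n. v m n \<noteq> 0}" using G2 by blast
    qed
    then show "finite {m. \<exists>p\<in>lat I \<times> lat I. \<exists>n. ?f p m n \<noteq> 0}"
      by (rule finite_subset) (use v in \<open>simp add: good_def\<close>)
    show "\<forall>p\<in>lat I \<times> lat I. \<forall>m n. ?f p m n \<noteq> 0 \<longrightarrow> nle I B n"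
    proof (intro ballI allI impI)
      fix p m n assume a: "p \<in> lat I \<times> lat I" "?f p m n \<noteq> 0"
      note h = fnz[OF a(2) a(1)]
      show "nle I B n" using nle_trans[of I B "fst p" n] h by simp
    qed
  next
    fix m n
    show "\<exists>S. finite S \<and> S \<subseteq> lat I \<times> lat I \<and> (\<forall>p\<in>lat I \<times> lat I - S. ?f p m n = 0) \<and> v m n = (\<Sum>p\<in>S. ?f p m n)"
    proof (cases "m \<in> lat I \<and> n \<in> lat I \<and> nle I B n")
      case False
      have "?f p m n = 0" if "p \<in> lat I \<times> lat I" for p
      proof (rule ccontr)
        assume "?f p m n \<noteq> 0"
        note h = fnz[OF this that]
        have "m = snd p - nB I eps (fst p)" using h by (metis add_diff_cancel)
        then have "m \<in> lat I" using that by (auto intro: lat_diff lat_nB)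
        moreover have "n = (n - fst p) + fst p" by simp
        then have "n \<in> lat I" using h by (metis lat_add)
        moreover have "nle I B n" using nle_trans[of I B "fst p" n] h by simp
        ultimately show False using False by blast
      qed
      moreover have "v m n = 0" using False vl B by blast
      ultimately show ?thesis by (intro exI[of _ "{}"]) auto
    next
      case True
      define S where "S = (\<lambda>k. (k, m + nB I eps k)) ` box n"
      have Ssub: "S \<subseteq> lat I \<times> lat I" unfolding S_def box_def using True by (auto intro: lat_add lat_nB)
      have out: "\<forall>p\<in>lat I \<times> lat I - S. ?f p m n = 0"
      proof (intro ballI, rule ccontr)
        fix p assume p: "p \<in> lat I \<times> lat I - S" "?f p m n \<noteq> 0"
        have pP: "p \<in> lat I \<times> lat I" using p(1) by blast
        note h = fnz[OF p(2) pP]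
        have b1: "fst p \<in> box n" unfolding box_def using h by blast
        have "snd p = m + nB I eps (fst p)" using h by simp
        then have b2: "p = (fst p, m + nB I eps (fst p))" by (cases p) simp
        have "p \<in> S" unfolding S_def by (rule image_eqI[where x = "fst p" and f = "\<lambda>k. (k, m + nB I eps k)", OF b2 b1])
        then show False using p(1) by simp
      qed
      have inS: "inj_on (\<lambda>k. (k, m + nB I eps k)) (box n)" by (auto intro: inj_onI)
      have nbox: "n \<in> box n" using True unfolding box_def by (auto simp: nle_def)
      have jl: "m + nB I eps n \<in> lat I" using True by (auto intro: lat_add lat_nB)
      have "(\<Sum>p\<in>S. ?f p m n) = (\<Sum>k\<in>box n. ?f (k, m + nB I eps k) m n)"
        unfolding S_def using inS by (simp add: sum.reindex)
      also have "\<dots> = (\<Sum>k\<in>box n. G m k * theta (m + nB I eps k) (m + nB I eps k) (n - k))"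
        by (simp add: C_def smultA_def Uf_apply)
      also have "\<dots> = G m n * theta (m + nB I eps n) (m + nB I eps n) (n - n) +
          (\<Sum>k\<in>box n - {n}. G m k * theta (m + nB I eps k) (m + nB I eps k) (n - k))"
        by (subst sum.remove[OF fbox nbox]) simp
      also have "\<dots> = v m n"
        using Geq[of m n] True pt jl unfolding Fm_def pointed_at_def by simp
      finally show ?thesis using Ssub out fbox unfolding S_def by (intro exI[of _ S]) (auto simp: S_def)
    qed
  qed
  then show ?thesis by blast
qed

lemma has_sumA_cong:
  assumes "\<forall>j\<in>J. f j = g j"
  shows "has_sumA I f J v \<longleftrightarrow> has_sumA I g J v"
proof -
  have fin: "finite J \<Longrightarrow> (\<Sum>j\<in>J. f j) = (\<Sum>j\<in>J. g j)" using assms by (intro sum.cong) auto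
  have inf: "(\<lambda>k. \<Sum>i<k. f (e i)) = (\<lambda>k. \<Sum>i<k. g (e i))" if "bij_betw e (UNIV::nat set) J" for e
    using assms that by (intro ext sum.cong refl) (auto simp: bij_betw_def)
  show ?thesis unfolding has_sumA_def using fin inf by auto
qed

theorem mainTheorem4:
  fixes I Iuf :: "'i set"
    and eps :: "'i \<Rightarrow> 'i \<Rightarrow> int"
    and d :: "'i \<Rightarrow> int"
    and theta :: "('i \<Rightarrow> int) \<Rightarrow> ('i, 'k::field_char_0) ser"
  assumes "finite I" and "Iuf \<subseteq> I"
    and "\<forall>i\<in>Iuf. d i > 0"
    and "\<forall>i\<in>Iuf. \<forall>j\<in>Iuf. d i * eps i j = - (d j * eps j i)"
    and nondeg: "\<forall>a :: 'i \<Rightarrow> rat.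
            (\<forall>j\<in>I - Iuf. (\<Sum>i\<in>Iuf. a i * of_int (eps i j)) = 0) \<longrightarrow> (\<forall>i\<in>Iuf. a i = 0)"
    and theta_pointed: "\<forall>m\<in>lat Iuf. pointed_at Iuf m (theta m)"
    and theta_mult: "\<forall>p1\<in>lat Iuf. \<forall>p2\<in>lat Iuf. \<exists>a :: ('i \<Rightarrow> int) \<Rightarrow> ('i \<Rightarrow> int) \<Rightarrow> nat.
            (\<forall>m n. a m n \<noteq> 0 \<longrightarrow> m \<in> lat Iuf \<and> n \<in> lat Iuf \<and> nle Iuf 0 n)
          \<and> has_sumA Iuf (\<lambda>(m, n). smultA (of_nat (a m n)) (mulA (sigmaA Iuf eps n) (theta m)))
                (lat Iuf \<times> lat Iuf) (mulA (theta p1) (theta p2))"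
  shows "reduced_basisA Iuf eps (canA Iuf eps theta) theta"
proof -
  have fI: "finite Iuf" using assms(1,2) finite_subset by blast
  note pt = theta_pointed
  let ?P = "lat Iuf \<times> lat Iuf"
  define Uf where "Uf p = mulA (sigmaA Iuf eps (fst p)) (theta (snd p))" for p
  have Ueq: "{mulA (sigmaA Iuf eps n) (theta m) | n m. n \<in> lat Iuf \<and> m \<in> lat Iuf} = Uf ` ?P"
    unfolding Uf_def by force
  have Uval: "Uf (k, j) m n = theta j (m + nB Iuf eps k) (n - k)" for k j m n
    unfolding Uf_def by (simp add: Uf_apply)
  have one: "Uf (k, j) (j - nB Iuf eps k) k = 1" if "j \<in> lat Iuf" for k j
    using pt that unfolding Uval pointed_at_def by simp
  have injU: "inj_on Uf ?P"
  proof (rule inj_onI)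
    fix p q assume p: "p \<in> ?P" and q: "q \<in> ?P" and eq: "Uf p = Uf q"
    obtain k j k' j' where pq: "p = (k, j)" "q = (k', j')" by fastforce
    have l: "k \<in> lat Iuf" "j \<in> lat Iuf" "k' \<in> lat Iuf" "j' \<in> lat Iuf" using p q pq by auto
    have "Uf (k', j') (j - nB Iuf eps k) k = 1" using one[OF l(2), of k] eq pq by simp
    then have a1: "theta j' (j - nB Iuf eps k + nB Iuf eps k') (k - k') \<noteq> 0" by (simp add: Uval)
    have "Uf (k, j) (j' - nB Iuf eps k') k' = 1" using one[OF l(4), of k'] eq pq by simp
    then have a2: "theta j (j' - nB Iuf eps k' + nB Iuf eps k) (k' - k) \<noteq> 0" by (simp add: Uval)
    have pj: "pointed_at Iuf j (theta j)" "pointed_at Iuf j' (theta j')" using pt l by blast+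
    have "nle Iuf 0 (k - k')" using pj(2) a1 unfolding pointed_at_def by blast
    then have "nle Iuf k' k" by (simp only: nle_diff)
    have "nle Iuf 0 (k' - k)" using pj(1) a2 unfolding pointed_at_def by blast
    then have "nle Iuf k k'" by (simp only: nle_diff)
    have kk: "k = k'" using nle_antisym[OF \<open>nle Iuf k k'\<close> \<open>nle Iuf k' k\<close> l(1) l(3)] .
    have "j - nB Iuf eps k + nB Iuf eps k' = j'" using pj(2) a1 unfolding pointed_at_def by blast
    then show "p = q" using pq kk by simp
  qed
  have UinC: "Uf p \<in> canA Iuf eps theta" if "p \<in> ?P" for p
  proof -
    have "smultA 1 (sigmaA Iuf eps (fst p)) \<in> canA Iuf eps theta" using that by (intro canA.sigma) auto
    moreover have "smultA 1 (sigmaA Iuf eps (fst p)) = (sigmaA Iuf eps (fst p) :: ('i,'k) ser)"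
      by (simp add: smultA_def)
    ultimately have s: "sigmaA Iuf eps (fst p) \<in> canA Iuf eps theta" by simp
    have "theta (snd p) \<in> canA Iuf eps theta" using that by (intro canA.theta) auto
    then show ?thesis unfolding Uf_def by (rule canA.mul[OF s])
  qed
  have cP: "countable ?P" using countable_lat[OF fI] by (simp add: countable_SIGMA)
  have basis: "is_basisA Iuf (canA Iuf eps theta) (Uf ` ?P)"
    unfolding is_basisA_def
  proof (intro conjI ballI)
    show "Uf ` ?P \<subseteq> canA Iuf eps theta" using UinC by blast
    show "countable (Uf ` ?P)" using cP by simp
  next
    fix v assume vC: "v \<in> canA Iuf eps theta"
    have gv: "good Iuf v" using canA_good[OF pt vC] .
    obtain C where C: "has_sumA Iuf (\<lambda>p. smultA (C p) (Uf p)) ?P v"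
      using exist[OF pt fI gv, of eps] unfolding Uf_def by blast
    define a where "a u = C (the_inv_into ?P Uf u)" for u
    have aU: "a (Uf p) = C p" if "p \<in> ?P" for p
      unfolding a_def using the_inv_into_f_f[OF injU that] by simp
    have hsP: "has_sumA Iuf ((\<lambda>u. smultA (a u) u) \<circ> Uf) ?P v"
      using C by (subst has_sumA_cong[where g = "\<lambda>p. smultA (C p) (Uf p)"]) (auto simp: aU)
    have hs: "has_sumA Iuf (\<lambda>u. smultA (a u) u) (Uf ` ?P) v"
      using hsP has_sumA_reindex[OF injU] by blast
    show "\<exists>a. has_sumA Iuf (\<lambda>u. smultA (a u) u) (Uf ` ?P) v \<and>
           (\<forall>a'. has_sumA Iuf (\<lambda>u. smultA (a' u) u) (Uf ` ?P) v \<longrightarrow> (\<forall>u\<in>Uf ` ?P. a' u = a u))"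
    proof (intro exI conjI allI impI ballI)
      show "has_sumA Iuf (\<lambda>u. smultA (a u) u) (Uf ` ?P) v" by (rule hs)
    next
      fix a' u assume h': "has_sumA Iuf (\<lambda>u. smultA (a' u) u) (Uf ` ?P) v" and u: "u \<in> Uf ` ?P"
      have h'P: "has_sumA Iuf ((\<lambda>u. smultA (a' u) u) \<circ> Uf) ?P v"
        using h' has_sumA_reindex[OF injU] by blast
      have d: "has_sumA Iuf (\<lambda>p. ((\<lambda>u. smultA (a' u) u) \<circ> Uf) p - ((\<lambda>u. smultA (a u) u) \<circ> Uf) p) ?P (v - v)"
        by (rule has_sumA_diff[OF h'P hsP])
      have eqf: "(\<lambda>p. ((\<lambda>u. smultA (a' u) u) \<circ> Uf) p - ((\<lambda>u. smultA (a u) u) \<circ> Uf) p) =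
                 (\<lambda>p. smultA (a' (Uf p) - a (Uf p)) (mulA (sigmaA Iuf eps (fst p)) (theta (snd p))))"
        unfolding Uf_def by (auto simp: smultA_def fun_eq_iff left_diff_distrib)
      have "has_sumA Iuf (\<lambda>p. smultA (a' (Uf p) - a (Uf p)) (mulA (sigmaA Iuf eps (fst p)) (theta (snd p)))) ?P 0"
        using d unfolding eqf by simp
      then have "\<forall>p\<in>?P. a' (Uf p) - a (Uf p) = 0" by (rule uniq[OF pt fI])
      then show "a' u = a u" using u by auto
    qed
  qed
  show ?thesis unfolding reduced_basisA_def Ueq[folded Uf_def]
    using basis pt by (auto intro: canA.theta)
qed

end
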